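(* There exists a beyond quantum state $W \in \mathcal{W}(\mathbb{C}^2\otimes\mathbb{C}^2)$ whose classical-input classical-output correlations are classically simulable; that is, there exist a probability space $(\Lambda,\omega)$ and, for every finite-outcome POVM $A=\{A_i\}_i$ on $\mathbb{C}^2$ and every finite-outcome POVM $B=\{B_j\}_j$ on $\mathbb{C}^2$, measurable response functions $\lambda\mapsto P(A_i|A,\lambda)\in[0,1]$ and $\lambda\mapsto P(B_j|B,\lambda)\in[0,1]$ with $\sum_i P(A_i|A,\lambda)=1=\sum_j P(B_j|B,\lambda)$ for all $\lambda$, such that for all such POVMs $A,B$ and all outcomes $i,j$, $$\operatorname{Tr}\big[W(A_i\otimes B_j)\big]=\int_\Lambda P(A_i|A,\lambda)\,P(B_j|B,\lambda)\,d\omega(\lambda).$$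
   Context: For finite-dimensional Hilbert spaces $\mathcal{H}_{A_1},\dots,\mathcal{H}_{A_n}$, a POPT (positive over all pure tensors) state is a Hermitian operator $W$ on $\bigotimes_i\mathcal{H}_{A_i}$ with $\operatorname{Tr}W=1$ and $\operatorname{Tr}[W(P_1\otimes\cdots\otimes P_n)]\ge 0$ for all positive semidefinite operators $P_i$ on $\mathcal{H}_{A_i}$; the set of POPT states is denoted $\mathcal{W}(\bigotimes_i\mathcal{H}_{A_i})$. A beyond quantum state (BQS) is a POPT state that is not positive semidefinite, i.e. an element of $\mathcal{W}(\bigotimes_i\mathcal{H}_{A_i})\setminus\mathcal{D}(\bigotimes_i\mathcal{H}_{A_i})$, where $\mathcal{D}$ denotes the set of density operators (positive semidefinite, unit trace). A POVM on $\mathcal{H}$ is a finite family of positive semidefinite operators summing to the identity. *)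

theory Defs
  imports "HOL-Analysis.Analysis" "HOL-Probability.Probability" "HOL-Library.Complex_Order"
begin

text \<open>Operators on a finite-dimensional Hilbert space with orthonormal basis indexed by
  the finite type 'n are matrices of type complex^'n^'n.  The space C^2 uses index type 2,
  and C^2 tensor C^2 uses the index type 2 \<times> 2.  The order on complex numbers is the one of
  HOL-Library.Complex_Order: z \<ge> 0 iff z is real and nonnegative.\<close>

definition hermitian :: "complex^'n^'n \<Rightarrow> bool" where
  "hermitian M \<longleftrightarrow> (\<forall>i j. M $ i $ j = cnj (M $ j $ i))"

definition psd :: "complex^'n^'n \<Rightarrow> bool" where
  "psd M \<longleftrightarrow> (\<forall>v :: complex^'n. 0 \<le> (\<Sum>i\<in>UNIV. \<Sum>j\<in>UNIV. cnj (v $ i) * M $ i $ j * v $ j))"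

definition tensor :: "complex^'n^'n \<Rightarrow> complex^'m^'m \<Rightarrow> complex^('n \<times> 'm)^('n \<times> 'm)" where
  "tensor A B = (\<chi> r. \<chi> c. A $ fst r $ fst c * B $ snd r $ snd c)"

definition popt :: "complex^(2 \<times> 2)^(2 \<times> 2) \<Rightarrow> bool" where
  "popt W \<longleftrightarrow> hermitian W \<and> trace W = 1 \<and>
     (\<forall>P Q :: complex^2^2. psd P \<and> psd Q \<longrightarrow> 0 \<le> trace (W ** tensor P Q))"

definition density :: "complex^'n^'n \<Rightarrow> bool" where
  "density M \<longleftrightarrow> psd M \<and> trace M = 1"

definition beyond_quantum :: "complex^(2 \<times> 2)^(2 \<times> 2) \<Rightarrow> bool" where
  "beyond_quantum W \<longleftrightarrow> popt W \<and> \<not> density W"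

text \<open>A finite-outcome POVM on C^2: a finite list of PSD operators summing to the identity;
  outcome i is the i-th list entry.\<close>
definition povm :: "(complex^2^2) list \<Rightarrow> bool" where
  "povm A \<longleftrightarrow> (\<forall>a \<in> set A. psd a) \<and> sum_list A = mat 1"

text \<open>It is without loss of generality:
  any model on an arbitrary probability space can be pushed forward along the measurable map
  sending a hidden variable to the table of all response probabilities
  (party flag, POVM, outcome) \<mapsto> probability, with the product sigma-algebra.\<close>
type_synonym hidden = "bool \<times> (complex^2^2) list \<times> nat \<Rightarrow> real"

end

theory Submission
  imports Defs
begin


lemma UNIV_22: "(UNIV :: (2 \<times> 2) set) = {(1,1),(1,2),(2,1),(2,2)}"
  using exhaust_2 by auto

lemma sum_22: "sum f (UNIV :: (2 \<times> 2) set) = f (1,1) + f (1,2) + f (2,1) + f (2,2)"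
  unfolding UNIV_22 by (simp add: add.assoc)

lemma two_neq [simp]: "(1::2) \<noteq> 2" "(2::2) \<noteq> 1"
  by (simp_all add: exhaust_2)

definition qf :: "complex^2^2 \<Rightarrow> complex \<Rightarrow> complex \<Rightarrow> complex" where
  "qf M x y = cnj x * M$1$1 * x + cnj x * M$1$2 * y + cnj y * M$2$1 * x + cnj y * M$2$2 * y"

lemma psd_qf: assumes "psd M" shows "0 \<le> qf M x y"
proof -
  have "0 \<le> (\<Sum>i\<in>UNIV. \<Sum>j\<in>UNIV. cnj ((vector [x,y] :: complex^2) $ i) * M $ i $ j * (vector [x,y] :: complex^2) $ j)"
    using assms unfolding psd_def by blast
  then show ?thesis by (simp add: sum_2 qf_def vector_2 add.assoc)
qed

lemma psd_herm: assumes "psd (M::complex^2^2)" shows "hermitian M"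
proof -
  have 1: "0 \<le> qf M 1 0" "0 \<le> qf M 0 1" "0 \<le> qf M 1 1" "0 \<le> qf M 1 \<i>"
    using psd_qf[OF assms] by auto
  then have "Im (M$1$1) = 0" "Im (M$2$2) = 0" "Im (M$1$2 + M$2$1) = 0"
     "Re (M$1$2) - Re (M$2$1) = 0"
    by (auto simp: qf_def less_eq_complex_def)
  then have h: "M$1$1 = cnj (M$1$1)" "M$2$2 = cnj (M$2$2)" "M$1$2 = cnj (M$2$1)" "M$2$1 = cnj (M$1$2)"
    by (auto simp: complex_eq_iff)
  show ?thesis unfolding hermitian_def
  proof (intro allI)
    fix i j :: 2
    from exhaust_2[of i] exhaust_2[of j] h show "M$i$j = cnj (M$j$i)"
      by (elim disjE) (simp_all only:)
  qed
qed

type_synonym r3 = "real \<times> real \<times> real"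

definition dot :: "r3 \<Rightarrow> r3 \<Rightarrow> real" where
  "dot a b = fst a * fst b + fst (snd a) * fst (snd b) + snd (snd a) * snd (snd b)"

definition al :: "complex^2^2 \<Rightarrow> real" where "al M = Re (M$1$1 + M$2$2) / 2"
definition bl1 :: "complex^2^2 \<Rightarrow> real" where "bl1 M = Re (M$1$2)"
definition bl2 :: "complex^2^2 \<Rightarrow> real" where "bl2 M = - Im (M$1$2)"
definition bl3 :: "complex^2^2 \<Rightarrow> real" where "bl3 M = Re (M$1$1 - M$2$2) / 2"
definition bv :: "complex^2^2 \<Rightarrow> r3" where "bv M = (bl1 M, bl2 M, bl3 M)"

lemma herm_entries:
  assumes "hermitian M"
  shows "M$1$1 = Complex (al M + bl3 M) 0" "M$2$2 = Complex (al M - bl3 M) 0"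
        "M$1$2 = Complex (bl1 M) (- bl2 M)" "M$2$1 = Complex (bl1 M) (bl2 M)"
proof -
  have h: "M$1$1 = cnj (M$1$1)" "M$2$2 = cnj (M$2$2)" "M$2$1 = cnj (M$1$2)"
    using assms unfolding hermitian_def by blast+
  have i: "Im (M$1$1) = 0" "Im (M$2$2) = 0" "Re (M$2$1) = Re (M$1$2)" "Im (M$2$1) = - Im (M$1$2)"
    using h by (simp_all add: complex_eq_iff)
  show "M$1$1 = Complex (al M + bl3 M) 0" "M$2$2 = Complex (al M - bl3 M) 0"
        "M$1$2 = Complex (bl1 M) (- bl2 M)" "M$2$1 = Complex (bl1 M) (bl2 M)"
    using i by (simp_all add: complex_eq_iff al_def bl1_def bl2_def bl3_def field_simps)
qed

lemma alice_nonneg: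
  assumes "psd M" and u: "dot m m = 1"
  shows "0 \<le> al M + dot (bv M) m"
proof -
  obtain x y z where m: "m = (x,y,z)" by (cases m) auto
  have u': "x^2 + y^2 + z^2 = 1" using u by (simp add: m dot_def power2_eq_square)
  note e = herm_entries[OF psd_herm[OF assms(1)]]
  show ?thesis
  proof (cases "z = -1")
    case True
    then have "x^2 + y^2 = 0" using u' by simp
    then have xy: "x = 0" "y = 0" by (simp_all add: sum_power2_eq_zero_iff)
    have "0 \<le> qf M 0 1" by (rule psd_qf[OF assms(1)])
    then have "0 \<le> Re (M$2$2)" by (simp add: qf_def less_eq_complex_def)
    then show ?thesis using True xy by (simp add: m dot_def bv_def e)
  next
    case False
    have "0 \<le> x^2" "0 \<le> y^2" by simp_all
    then have "z^2 \<le> 1" using u' by linarith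
    then have "\<bar>z\<bar> \<le> 1" by (simp add: abs_square_le_1)
    then have "z \<ge> -1" by linarith
    with False have zp: "1 + z > 0" by simp
    have "0 \<le> qf M (of_real (1+z)) (Complex x y)" by (rule psd_qf[OF assms(1)])
    then have "0 \<le> Re (qf M (of_real (1+z)) (Complex x y))" by (simp add: less_eq_complex_def)
    also have "Re (qf M (of_real (1+z)) (Complex x y)) =
       (1+z)^2*(al M + bl3 M) + 2*(1+z)*(bl1 M*x+bl2 M*y) + (x^2+y^2)*(al M - bl3 M)"
      by (simp add: qf_def e algebra_simps power2_eq_square)
    also have "\<dots> = 2*(1+z)*(al M + dot (bv M) m)"
    proof -
      have xy: "x^2+y^2 = 1 - z^2" using u' by simp
      show ?thesis by (simp only: xy) (simp add: m dot_def bv_def algebra_simps power2_eq_square)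
    qed
    finally show ?thesis using zp by (simp add: zero_le_mult_iff)
  qed
qed

lemma cauchy3: "(dot a m)^2 \<le> dot a a * dot m m"
proof -
  obtain a1 a2 a3 where a: "a = (a1,a2,a3)" by (cases a) auto
  obtain x y z where m: "m = (x,y,z)" by (cases m) auto
  have "dot a a * dot m m - (dot a m)^2 = (a1*y-a2*x)^2 + (a1*z-a3*x)^2 + (a2*z-a3*y)^2"
    by (simp add: a m dot_def power2_eq_square algebra_simps)
  moreover have "0 \<le> (a1*y-a2*x)^2 + (a1*z-a3*x)^2 + (a2*z-a3*y)^2" by simp
  ultimately show ?thesis by linarith
qed

lemma dot_self_nonneg: "0 \<le> dot a a"
  by (simp add: dot_def)

lemma abs_dot_le: assumes "dot m m = 1" shows "\<bar>dot a m\<bar> \<le> sqrt (dot a a)"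
proof -
  have "(dot a m)^2 \<le> dot a a" using cauchy3[of a m] assms by simp
  then show ?thesis using real_le_rsqrt real_sqrt_abs by (metis real_sqrt_le_mono)
qed

lemma dot_scale: "dot a (c*fst (m::r3), c*fst (snd m), c * snd (snd m)) = c * dot a m"
  by (simp add: dot_def algebra_simps)

lemma bloch_bound:
  assumes "psd M" shows "sqrt (dot (bv M) (bv M)) \<le> al M"
proof (cases "dot (bv M) (bv M) = 0")
  case True
  have "0 \<le> al M + dot (bv M) (0,0,1)" "0 \<le> al M + dot (bv M) (0,0,-1)"
    by (rule alice_nonneg[OF assms], simp add: dot_def)+
  then show ?thesis using True by (simp add: dot_def)
next
  case False
  define n where "n = sqrt (dot (bv M) (bv M))"
  have np: "n > 0" using False dot_self_nonneg[of "bv M"] by (simp add: n_def)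
  have nn: "n * n = dot (bv M) (bv M)" using dot_self_nonneg[of "bv M"] by (simp add: n_def)
  define m where "m = ((-1/n)*fst (bv M), (-1/n)*fst (snd (bv M)), (-1/n) * snd (snd (bv M)))"
  have "dot m m = (1/(n*n)) * dot (bv M) (bv M)"
    by (simp add: m_def dot_def algebra_simps power2_eq_square)
  then have mu: "dot m m = 1" using nn np False by simp
  have "dot (bv M) m = - (1/n) * dot (bv M) (bv M)" unfolding m_def dot_scale by simp
  then have "n * dot (bv M) m = n * (- n)" using nn np by (simp add: field_simps)
  then have "n * dot (bv M) m = n * (- n)" by simp
  then have "dot (bv M) m = - n" using np by (metis mult_left_cancel less_irrefl)
  with alice_nonneg[OF assms mu] show ?thesis by (simp add: n_def)
qed



definition tt :: real where "tt = 11/30"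

definition Wm :: "complex^(2 \<times> 2)^(2 \<times> 2)" where
 "Wm = (\<chi> r c. complex_of_real ((1-tt)/4) * (if r = c then 1 else 0)
        + complex_of_real (tt/2) * (if fst r = snd c \<and> snd r = fst c then 1 else 0))"

lemma trace_Wm_tensor0:
  "trace (Wm ** tensor M N) = complex_of_real ((1-tt)/4) * ((M$1$1+M$2$2)*(N$1$1+N$2$2))
     + complex_of_real (tt/2) * (M$1$1*N$1$1 + M$2$1*N$1$2 + M$1$2*N$2$1 + M$2$2*N$2$2)"
  by (simp add: trace_def matrix_matrix_mult_def tensor_def Wm_def sum_22 algebra_simps)

lemma tr_herm: assumes "hermitian M" shows "M$1$1 + M$2$2 = complex_of_real (2 * al M)"
  unfolding herm_entries[OF assms] by (simp add: complex_eq_iff)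

lemma trprod_herm: assumes hM: "hermitian M" and hN: "hermitian N"
  shows "M$1$1*N$1$1 + M$2$1*N$1$2 + M$1$2*N$2$1 + M$2$2*N$2$2 = complex_of_real (2 * (al M * al N + dot (bv M) (bv N)))"
  unfolding herm_entries[OF hM] herm_entries[OF hN] by (simp add: complex_eq_iff dot_def bv_def algebra_simps)

lemma trace_Wm_tensor:
  assumes hM: "hermitian M" and hN: "hermitian N"
  shows "trace (Wm ** tensor M N) = complex_of_real (al M * al N + tt * dot (bv M) (bv N))"
proof -
  have "trace (Wm ** tensor M N) = complex_of_real ((1-tt)/4 * ((2 * al M) * (2 * al N)) + tt/2 * (2 * (al M * al N + dot (bv M) (bv N))))"
    unfolding trace_Wm_tensor0 tr_herm[OF hM] tr_herm[OF hN] trprod_herm[OF hM hN] by simp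
  also have "(1-tt)/4 * ((2 * al M) * (2 * al N)) + tt/2 * (2 * (al M * al N + dot (bv M) (bv N))) = al M * al N + tt * dot (bv M) (bv N)"
    by (simp add: field_simps)
  finally show ?thesis .
qed

lemma trace_Wm: "trace Wm = 1"
  by (simp add: trace_def Wm_def sum_22 field_simps)

lemma herm_Wm: "hermitian Wm"
  unfolding hermitian_def
proof (intro allI)
  fix i j :: "2 \<times> 2"
  have e: "(fst i = snd j \<and> snd i = fst j) = (fst j = snd i \<and> snd j = fst i)" "(i = j) = (j = i)"
    by auto
  show "Wm $ i $ j = cnj (Wm $ j $ i)"
    unfolding Wm_def vec_lambda_beta e by simp
qed

lemma Wm_entries:
  "Wm $ (1,2) $ (1,2) = complex_of_real ((1-tt)/4)"
  "Wm $ (2,1) $ (2,1) = complex_of_real ((1-tt)/4)"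
  "Wm $ (1,2) $ (2,1) = complex_of_real (tt/2)"
  "Wm $ (2,1) $ (1,2) = complex_of_real (tt/2)"
  by (simp_all add: Wm_def)

lemma not_psd_Wm: "\<not> psd Wm"
proof
  define v :: "complex^(2\<times>2)" where "v = (\<chi> r. if r = (1,2) then 1 else if r = (2,1) then -1 else 0)"
  have v: "v $ (1,1) = 0" "v $ (1,2) = 1" "v $ (2,1) = -1" "v $ (2,2) = 0"
    by (simp_all add: v_def)
  assume "psd Wm"
  then have "0 \<le> (\<Sum>i\<in>UNIV. \<Sum>j\<in>UNIV. cnj (v $ i) * Wm $ i $ j * v $ j)"
    unfolding psd_def by blast
  also have "(\<Sum>i\<in>UNIV. \<Sum>j\<in>UNIV. cnj (v $ i) * Wm $ i $ j * v $ j) =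
     Wm $ (1,2) $ (1,2) - Wm $ (1,2) $ (2,1) - Wm $ (2,1) $ (1,2) + Wm $ (2,1) $ (2,1)"
    by (simp add: sum_22 v)
  also have "\<dots> = complex_of_real ((1 - 3*tt)/2)"
    unfolding Wm_entries by (simp add: field_simps)
  finally have "0 \<le> (1 - 3*tt)/2" by (simp only: less_eq_complex_def Re_complex_of_real) simp
  moreover have "(1 - 3*tt)/2 < 0" by (simp add: tt_def)
  ultimately show False by linarith
qed



definition octs :: "r3 list" where
  "octs = [(1,0,0),(-1,0,0),(0,1,0),(0,-1,0),(0,0,1),(0,0,-1)]"

definition p24 :: "r3 list" where
  "p24 = concat (map (\<lambda>(s1,s2,s3). [(s1*2/3, s2*2/3, s3/3), (s1*2/3, s2/3, s3*2/3), (s1/3, s2*2/3, s3*2/3)])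
     [(1,1,1),(1,1,-1),(1,-1,1),(1,-1,-1),(-1,1,1),(-1,1,-1),(-1,-1,1),(-1,-1,-1)])"

definition Dw :: "(r3 \<Rightarrow> real) \<Rightarrow> real" where
  "Dw G = 13/240 * sum_list (map G octs) + 9/320 * sum_list (map G p24)"

lemma m0: "Dw (\<lambda>m. 1) = 1"
proof -
  obtain a1 a2 a3 where a: "a = (a1,a2,a3)" by (cases a) auto
  obtain b1 b2 b3 where b: "b = (b1,b2,b3)" by (cases b) auto
  show ?thesis
    unfolding Dw_def octs_def p24_def a b
    by (simp add: dot_def algebra_simps power2_eq_square power3_eq_cube; simp add: field_simps)
qed

lemma m1: "Dw (\<lambda>m. dot b m) = 0"
proof -
  obtain a1 a2 a3 where a: "a = (a1,a2,a3)" by (cases a) auto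
  obtain b1 b2 b3 where b: "b = (b1,b2,b3)" by (cases b) auto
  show ?thesis
    unfolding Dw_def octs_def p24_def a b
    by (simp add: dot_def algebra_simps power2_eq_square power3_eq_cube; simp add: field_simps)
qed

lemma m2: "Dw (\<lambda>m. (dot b m)^2) = dot b b / 3"
proof -
  obtain a1 a2 a3 where a: "a = (a1,a2,a3)" by (cases a) auto
  obtain b1 b2 b3 where b: "b = (b1,b2,b3)" by (cases b) auto
  show ?thesis
    unfolding Dw_def octs_def p24_def a b
    by (simp add: dot_def algebra_simps power2_eq_square power3_eq_cube; simp add: field_simps)
qed

lemma m3: "Dw (\<lambda>m. (dot b m)^3) = 0"
proof -
  obtain a1 a2 a3 where a: "a = (a1,a2,a3)" by (cases a) auto
  obtain b1 b2 b3 where b: "b = (b1,b2,b3)" by (cases b) auto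
  show ?thesis
    unfolding Dw_def octs_def p24_def a b
    by (simp add: dot_def algebra_simps power2_eq_square power3_eq_cube; simp add: field_simps)
qed

lemma ma1: "Dw (\<lambda>m. dot a m * dot b m) = dot a b / 3"
proof -
  obtain a1 a2 a3 where a: "a = (a1,a2,a3)" by (cases a) auto
  obtain b1 b2 b3 where b: "b = (b1,b2,b3)" by (cases b) auto
  show ?thesis
    unfolding Dw_def octs_def p24_def a b
    by (simp add: dot_def algebra_simps power2_eq_square power3_eq_cube; simp add: field_simps)
qed

lemma ma2: "Dw (\<lambda>m. dot a m * (dot b m)^2) = 0"
proof -
  obtain a1 a2 a3 where a: "a = (a1,a2,a3)" by (cases a) auto
  obtain b1 b2 b3 where b: "b = (b1,b2,b3)" by (cases b) auto
  show ?thesis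
    unfolding Dw_def octs_def p24_def a b
    by (simp add: dot_def algebra_simps power2_eq_square power3_eq_cube; simp add: field_simps)
qed

lemma ma3: "Dw (\<lambda>m. dot a m * (dot b m)^3) = dot b b * dot a b / 5"
proof -
  obtain a1 a2 a3 where a: "a = (a1,a2,a3)" by (cases a) auto
  obtain b1 b2 b3 where b: "b = (b1,b2,b3)" by (cases b) auto
  show ?thesis
    unfolding Dw_def octs_def p24_def a b
    by (simp add: dot_def algebra_simps power2_eq_square power3_eq_cube; simp add: field_simps)
qed



lemma Dw_add: "Dw (\<lambda>m. F m + G m) = Dw F + Dw G"
  unfolding Dw_def by (simp add: sum_list_addf distrib_left; linarith)

lemma Dw_diff: "Dw (\<lambda>m. F m - G m) = Dw F - Dw G"
  unfolding Dw_def by (simp add: sum_list_subtractf right_diff_distrib; linarith)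

lemma Dw_cmult: "Dw (\<lambda>m. c * F m) = c * Dw F"
  unfolding Dw_def by (simp add: sum_list_const_mult algebra_simps)

lemma Dw_const: "Dw (\<lambda>m. c) = c"
  using Dw_cmult[of c "\<lambda>m. 1"] m0 by simp

lemma sum_list_map_sum: "sum_list (map (\<lambda>x. \<Sum>k\<in>S. F k x) xs) = (\<Sum>k\<in>S. sum_list (map (F k) xs))"
  by (induction xs) (simp_all add: sum.distrib)

lemma Dw_sum: "Dw (\<lambda>m. \<Sum>k\<in>S. F k m) = (\<Sum>k\<in>S. Dw (F k))"
  unfolding Dw_def by (simp add: sum_list_map_sum sum_distrib_left sum.distrib)

lemma Dw_cong: assumes "\<And>m. m \<in> set octs \<union> set p24 \<Longrightarrow> F m = G m" shows "Dw F = Dw G"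
proof -
  have eq: "map F octs = map G octs" "map F p24 = map G p24"
    using assms by (auto intro!: map_cong)
  show ?thesis unfolding Dw_def eq by (rule refl)
qed

lemma design_unit0: "\<forall>m \<in> set octs \<union> set p24. dot m m = 1"
  by (simp add: octs_def p24_def dot_def)

lemma design_unit: "m \<in> set octs \<union> set p24 \<Longrightarrow> dot m m = 1"
  using design_unit0 by blast

lemma moments_all:
  "Dw (\<lambda>m. k0 + k1 * dot b m + k2 * (dot b m)^2 + k3 * (dot b m)^3
        + j0 * dot a m + j1 * (dot a m * dot b m) + j2 * (dot a m * (dot b m)^2) + j3 * (dot a m * (dot b m)^3))
   = k0 + k2 * (dot b b / 3) + j1 * (dot a b / 3) + j3 * (dot b b * dot a b / 5)"
  by (simp only: Dw_add Dw_cmult Dw_const m1 m2 m3 m1[of a] ma1 ma2 ma3)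

definition Pf :: "real \<Rightarrow> real \<Rightarrow> real" where
  "Pf y r = (3*r + 5*y + y^2/r - y^3/r^2)/4"

lemma Dphi:
  "Dw (\<lambda>m. (al0 + dot a m) * (Pf (dot b m) (sqrt (dot b b)) + K))
     = al0 * (5/6 * sqrt (dot b b) + K) + 11/30 * dot a b"
proof -
  define r where "r = sqrt (dot b b)"
  have pw: "(al0 + dot a m) * (Pf (dot b m) r + K) =
     al0 * (3*r/4 + K) + (5*al0/4) * dot b m + (al0/(4*r)) * (dot b m)^2 + (-al0/(4*r^2)) * (dot b m)^3
     + (3*r/4 + K) * dot a m + (5/4) * (dot a m * dot b m) + (1/(4*r)) * (dot a m * (dot b m)^2)
     + (-1/(4*r^2)) * (dot a m * (dot b m)^3)" for m
    unfolding Pf_def by (simp add: algebra_simps diff_divide_distrib add_divide_distrib)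
  have "Dw (\<lambda>m. (al0 + dot a m) * (Pf (dot b m) r + K)) =
     al0 * (3*r/4 + K) + (al0/(4*r)) * (dot b b / 3) + (5/4) * (dot a b / 3) + (-1/(4*r^2)) * (dot b b * dot a b / 5)"
    unfolding pw moments_all by simp
  also have "\<dots> = al0 * (5/6 * r + K) + 11/30 * dot a b"
  proof (cases "r = 0")
    case True
    then have "dot b b = 0" using dot_self_nonneg[of b] by (simp add: r_def)
    then have "b = (0,0,0)" by (cases b) (simp add: dot_def add_nonneg_eq_0_iff)
    then show ?thesis using True by (simp add: dot_def)
  next
    case False
    have r2: "r^2 = dot b b" using dot_self_nonneg[of b] by (simp add: r_def)
    have "r^2 \<noteq> 0" using False by simp
    then have "dot b b \<noteq> 0" by (simp add: r2)
    then show ?thesis using False r2 by (simp add: field_simps power2_eq_square)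
  qed
  finally show ?thesis by (simp add: r_def)
qed

lemma Pf_bounds:
  assumes "\<bar>y\<bar> \<le> r"
  shows "0 \<le> Pf y r" "Pf y r \<le> r + y"
proof -
  have "0 \<le> Pf y r \<and> Pf y r \<le> r + y"
  proof (cases "r = 0")
    case True
    then have "y = 0" using assms by simp
    then show ?thesis using True by (simp add: Pf_def)
  next
    case False
    then have rp: "r > 0" using assms by simp
    have e1: "Pf y r = (r+y)^2*(3*r-y)/(4*r^2)"
      unfolding Pf_def using rp by (simp add: field_simps power2_eq_square power3_eq_cube)
    have e2: "r + y - Pf y r = (r+y)*(r-y)^2/(4*r^2)"
      unfolding Pf_def using rp by (simp add: field_simps power2_eq_square power3_eq_cube)
    have h1: "0 \<le> r + y" "0 \<le> 3*r - y" using assms by linarith+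
    have "0 \<le> (r+y)^2*(3*r-y)"
      using h1 by (intro mult_nonneg_nonneg) simp_all
    then have g1: "0 \<le> (r+y)^2*(3*r-y)/(4*r^2)" by (intro divide_nonneg_nonneg) simp_all
    have "0 \<le> (r+y)*(r-y)^2"
      using h1 by (intro mult_nonneg_nonneg) simp_all
    then have g2: "0 \<le> (r+y)*(r-y)^2/(4*r^2)" by (intro divide_nonneg_nonneg) simp_all
    note g = g1 g2
    show ?thesis using e1 e2 g by linarith
  qed
  then show "0 \<le> Pf y r" "Pf y r \<le> r + y" by auto
qed



lemma al_sum: "al (sum f S) = (\<Sum>i\<in>S. al (f i))"
  by (simp add: al_def Re_sum sum.distrib sum_divide_distrib[symmetric])
lemma bl1_sum: "bl1 (sum f S) = (\<Sum>i\<in>S. bl1 (f i))"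
  by (simp add: bl1_def Re_sum)
lemma bl2_sum: "bl2 (sum f S) = (\<Sum>i\<in>S. bl2 (f i))"
  by (simp add: bl2_def Im_sum sum_negf)
lemma bl3_sum: "bl3 (sum f S) = (\<Sum>i\<in>S. bl3 (f i))"
  by (simp add: bl3_def Re_sum sum_subtractf sum_divide_distrib[symmetric])

lemma mat1_bloch: "al (mat 1 :: complex^2^2) = 1" "bl1 (mat 1 :: complex^2^2) = 0"
   "bl2 (mat 1 :: complex^2^2) = 0" "bl3 (mat 1 :: complex^2^2) = 0"
  by (simp_all add: al_def bl1_def bl2_def bl3_def mat_def)

lemma sum_nth_list: "(\<Sum>k<length xs. G (xs!k)) = sum_list (map G xs)"
  using sum_list_sum_nth[of "map G xs"] by (simp add: atLeast0LessThan)

lemma povm_facts: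
  assumes "povm A"
  shows "(\<Sum>i<length A. al (A!i)) = 1" "(\<Sum>i<length A. bl1 (A!i)) = 0"
        "(\<Sum>i<length A. bl2 (A!i)) = 0" "(\<Sum>i<length A. bl3 (A!i)) = 0"
proof -
  have "sum_list A = (\<Sum>i<length A. A!i)" using sum_nth_list[of id A] by simp
  then have e: "mat 1 = (\<Sum>i<length A. A!i)" using assms by (simp add: povm_def)
  show "(\<Sum>i<length A. al (A!i)) = 1" "(\<Sum>i<length A. bl1 (A!i)) = 0"
        "(\<Sum>i<length A. bl2 (A!i)) = 0" "(\<Sum>i<length A. bl3 (A!i)) = 0"
    using mat1_bloch unfolding e al_sum bl1_sum bl2_sum bl3_sum by simp_all
qed

lemma povm_psd: "povm A \<Longrightarrow> i < length A \<Longrightarrow> psd (A!i)"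
  unfolding povm_def by simp

lemma sum_dot_left: "(\<Sum>i\<in>S. dot (bv (f i)) m) =
   (\<Sum>i\<in>S. bl1 (f i)) * fst m + (\<Sum>i\<in>S. bl2 (f i)) * fst (snd m) + (\<Sum>i\<in>S. bl3 (f i)) * snd (snd m)"
  by (simp add: dot_def bv_def sum.distrib sum_distrib_right)

lemma povm_dot0:
  assumes "povm A"
  shows "(\<Sum>i<length A. dot (bv (A!i)) m) = 0" "(\<Sum>i<length A. dot m (bv (A!i))) = 0"
proof -
  show 1: "(\<Sum>i<length A. dot (bv (A!i)) m) = 0"
    unfolding sum_dot_left using povm_facts[OF assms] by simp
  have "dot m (bv (A!i)) = dot (bv (A!i)) m" for i by (simp add: dot_def algebra_simps)
  then show "(\<Sum>i<length A. dot m (bv (A!i))) = 0" using 1 by simp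
qed

definition enc :: "r3 \<Rightarrow> hidden" where
  "enc m = (\<lambda>(b,xs,n). if n = 0 then fst m else if n = 1 then fst (snd m) else snd (snd m))"

definition dec :: "hidden \<Rightarrow> r3" where
  "dec l = (if dot (l (False,[],0), l (False,[],1), l (False,[],2)) (l (False,[],0), l (False,[],1), l (False,[],2)) = 1
            then (l (False,[],0), l (False,[],1), l (False,[],2)) else (0,0,1))"

lemma dec_unit: "dot (dec l) (dec l) = 1"
  by (simp add: dec_def dot_def)

lemma dec_enc: "dot m m = 1 \<Longrightarrow> dec (enc m) = m"
  by (cases m) (simp add: dec_def enc_def)

definition ptl :: "r3 list" where "ptl = concat (replicate 52 octs) @ concat (replicate 27 p24)"

lemma length_ptl: "length ptl = 960"
  by (simp add: ptl_def octs_def p24_def length_concat sum_list_replicate)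

lemma sum_list_concat_replicate: "sum_list (map G (concat (replicate n xs))) = real n * sum_list (map G xs)"
  by (induction n) (simp_all add: algebra_simps)

definition om :: "hidden measure" where
  "om = measure_pmf (map_pmf (\<lambda>k. enc (ptl ! k)) (pmf_of_set {..<960}))"

lemma prob_om: "prob_space om"
  unfolding om_def by (rule prob_space_measure_pmf)

lemma integral_om: "integral\<^sup>L om F = Dw (\<lambda>m. F (enc m))"
proof -
  have "integral\<^sup>L om F = (\<Sum>k\<in>{..<960}. F (enc (ptl ! k))) / card {..<960::nat}"
    unfolding om_def integral_map_pmf by (rule integral_pmf_of_set) (simp_all add: lessThan_empty_iff)
  also have "(\<Sum>k\<in>{..<960}. F (enc (ptl ! k))) = sum_list (map (\<lambda>m. F (enc m)) ptl)"
    using sum_nth_list[of "\<lambda>m. F (enc m)" ptl] by (simp add: length_ptl)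
  also have "\<dots> = 52 * sum_list (map (\<lambda>m. F (enc m)) octs) + 27 * sum_list (map (\<lambda>m. F (enc m)) p24)"
    by (simp add: ptl_def sum_list_concat_replicate)
  finally show ?thesis by (simp add: Dw_def)
qed

definition Phi :: "complex^2^2 \<Rightarrow> r3 \<Rightarrow> real" where
  "Phi M m = Pf (dot (bv M) m) (sqrt (dot (bv M) (bv M))) + 5/6 * (al M - sqrt (dot (bv M) (bv M)))"

definition PAf :: "(complex^2^2) list \<Rightarrow> nat \<Rightarrow> hidden \<Rightarrow> real" where
  "PAf A i l = al (A!i) + dot (bv (A!i)) (dec l)"

definition PBf :: "(complex^2^2) list \<Rightarrow> nat \<Rightarrow> hidden \<Rightarrow> real" where
  "PBf B j l = Phi (B!j) (dec l) + al (B!j) * (1 - (\<Sum>k<length B. Phi (B!k) (dec l)))"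

lemma Dw_Phi: "Dw (\<lambda>m. (al0 + dot a m) * Phi M m) = al0 * (5/6 * al M) + 11/30 * dot a (bv M)"
  unfolding Phi_def Dphi by (simp add: field_simps)

lemma corr:
  assumes "povm A" "povm B" "i < length A" "j < length B"
  shows "integral\<^sup>L om (\<lambda>l. PAf A i l * PBf B j l) = al (A!i) * al (B!j) + tt * dot (bv (A!i)) (bv (B!j))"
proof -
  define al0 where "al0 = al (A!i)"
  define a where "a = bv (A!i)"
  define n where "n = length B"
  have "integral\<^sup>L om (\<lambda>l. PAf A i l * PBf B j l) = Dw (\<lambda>m. PAf A i (enc m) * PBf B j (enc m))"
    by (rule integral_om)
  also have "\<dots> = Dw (\<lambda>m. (al0 + dot a m) * Phi (B!j) m + al (B!j) * (al0 + dot a m)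
      - al (B!j) * (\<Sum>k<n. (al0 + dot a m) * Phi (B!k) m))"
    by (rule Dw_cong) (simp add: PAf_def PBf_def dec_enc design_unit al0_def a_def n_def
        algebra_simps sum_distrib_left)
  also have "\<dots> = (al0 * (5/6 * al (B!j)) + 11/30 * dot a (bv (B!j))) + al (B!j) * al0
      - al (B!j) * (\<Sum>k<n. al0 * (5/6 * al (B!k)) + 11/30 * dot a (bv (B!k)))"
    by (simp only: Dw_add Dw_diff Dw_cmult Dw_sum Dw_Phi Dw_const m1 add_0_right)
  also have "(\<Sum>k<n. al0 * (5/6 * al (B!k)) + 11/30 * dot a (bv (B!k))) = al0 * 5/6"
  proof -
    have "(\<Sum>k<n. al0 * (5/6 * al (B!k)) + 11/30 * dot a (bv (B!k))) =
      al0 * (5/6 * (\<Sum>k<n. al (B!k))) + 11/30 * (\<Sum>k<n. dot a (bv (B!k)))"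
      by (simp add: sum.distrib sum_distrib_left)
    then show ?thesis using povm_facts(1)[OF assms(2)] povm_dot0(2)[OF assms(2), of a]
      by (simp add: n_def)
  qed
  finally show ?thesis by (simp add: al0_def a_def tt_def algebra_simps)
qed



lemma PA_nonneg: "povm A \<Longrightarrow> i < length A \<Longrightarrow> 0 \<le> PAf A i l"
  unfolding PAf_def by (rule alice_nonneg[OF povm_psd dec_unit])

lemma PA_sum: "povm A \<Longrightarrow> (\<Sum>i<length A. PAf A i l) = 1"
  unfolding PAf_def by (simp add: sum.distrib povm_facts(1) povm_dot0(1))

lemma le_of_sum1:
  assumes "finite S" "\<And>x. x \<in> S \<Longrightarrow> 0 \<le> f x" "sum f S = (1::real)" "i \<in> S"
  shows "f i \<le> 1"
  using member_le_sum[of i S f] assms by simp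

lemma Phi_bounds:
  assumes "psd M" "dot m m = 1"
  shows "0 \<le> Phi M m" "Phi M m \<le> dot (bv M) m + al M"
proof -
  define r where "r = sqrt (dot (bv M) (bv M))"
  have y: "\<bar>dot (bv M) m\<bar> \<le> r" unfolding r_def by (rule abs_dot_le[OF assms(2)])
  have ra: "r \<le> al M" unfolding r_def by (rule bloch_bound[OF assms(1)])
  note pb = Pf_bounds[OF y]
  show "0 \<le> Phi M m" unfolding Phi_def r_def[symmetric] using pb ra by simp
  show "Phi M m \<le> dot (bv M) m + al M" unfolding Phi_def r_def[symmetric] proof -
    have "5/6*(al M - r) \<le> al M - r" using ra by simp
    then show "Pf (dot (bv M) m) r + 5/6*(al M - r) \<le> dot (bv M) m + al M" using pb by linarith
  qed
qed

lemma al_nonneg: "psd M \<Longrightarrow> 0 \<le> al M"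
  using bloch_bound[of M] real_sqrt_ge_zero[OF dot_self_nonneg[of "bv M"]] by linarith

lemma PB_props:
  assumes "povm B"
  shows "\<And>j. j < length B \<Longrightarrow> 0 \<le> PBf B j l" "(\<Sum>j<length B. PBf B j l) = 1"
proof -
  define S where "S = (\<Sum>k<length B. Phi (B!k) (dec l))"
  have "S \<le> (\<Sum>k<length B. dot (bv (B!k)) (dec l) + al (B!k))"
    unfolding S_def by (rule sum_mono) (rule Phi_bounds(2)[OF povm_psd[OF assms] dec_unit], simp)
  also have "\<dots> = 1" by (simp add: sum.distrib povm_facts(1)[OF assms] povm_dot0(1)[OF assms])
  finally have S1: "S \<le> 1" .
  show "0 \<le> PBf B j l" if "j < length B" for j
  proof -
    have "0 \<le> Phi (B!j) (dec l)" by (rule Phi_bounds(1)[OF povm_psd[OF assms that] dec_unit])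
    moreover have "0 \<le> al (B!j) * (1 - S)" using al_nonneg[OF povm_psd[OF assms that]] S1 by simp
    ultimately show ?thesis unfolding PBf_def S_def[symmetric] by simp
  qed
  have "(\<Sum>j<length B. PBf B j l) = S + (\<Sum>j<length B. al (B!j)) * (1 - S)"
    unfolding PBf_def S_def[symmetric] by (simp add: sum.distrib sum_distrib_right S_def)
  then show "(\<Sum>j<length B. PBf B j l) = 1" using povm_facts(1)[OF assms] by simp
qed

lemma abs_dot_sqrt: "\<bar>dot a b\<bar> \<le> sqrt (dot a a) * sqrt (dot b b)"
proof -
  have "sqrt ((dot a b)^2) \<le> sqrt (dot a a * dot b b)"
    using cauchy3[of a b] by (rule real_sqrt_le_mono)
  then show ?thesis by (simp add: real_sqrt_mult)
qed

lemma popt_Wm: "popt Wm"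
  unfolding popt_def
proof (intro conjI herm_Wm trace_Wm allI impI)
  fix P Q :: "complex^2^2"
  assume pq: "psd P \<and> psd Q"
  then have hp: "psd P" and hq: "psd Q" by auto
  have "\<bar>dot (bv P) (bv Q)\<bar> \<le> al P * al Q"
    using abs_dot_sqrt[of "bv P" "bv Q"] bloch_bound[OF hp] bloch_bound[OF hq]
      mult_mono[OF bloch_bound[OF hp] bloch_bound[OF hq] al_nonneg[OF hp] real_sqrt_ge_zero[OF dot_self_nonneg]]
    by linarith
  then have "0 \<le> al P * al Q + tt * dot (bv P) (bv Q)" unfolding tt_def by (simp add: abs_le_iff)
  then show "0 \<le> trace (Wm ** tensor P Q)"
    unfolding trace_Wm_tensor[OF psd_herm[OF hp] psd_herm[OF hq]] by (simp add: less_eq_complex_def)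
qed

lemma bq_Wm: "beyond_quantum Wm"
  unfolding beyond_quantum_def density_def using popt_Wm not_psd_Wm by simp

theorem proposition1:
  shows "\<exists>W :: complex^(2 \<times> 2)^(2 \<times> 2). beyond_quantum W \<and>
    (\<exists>(\<omega> :: hidden measure) (PA :: (complex^2^2) list \<Rightarrow> nat \<Rightarrow> hidden \<Rightarrow> real)
        (PB :: (complex^2^2) list \<Rightarrow> nat \<Rightarrow> hidden \<Rightarrow> real).
       prob_space \<omega> \<and>
       (\<forall>A. povm A \<longrightarrow>
          (\<forall>i < length A. PA A i \<in> borel_measurable \<omega> \<and>
             (\<forall>l\<in>space \<omega>. 0 \<le> PA A i l \<and> PA A i l \<le> 1)) \<and>
          (\<forall>l\<in>space \<omega>. (\<Sum>i<length A. PA A i l) = 1)) \<and>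
       (\<forall>B. povm B \<longrightarrow>
          (\<forall>j < length B. PB B j \<in> borel_measurable \<omega> \<and>
             (\<forall>l\<in>space \<omega>. 0 \<le> PB B j l \<and> PB B j l \<le> 1)) \<and>
          (\<forall>l\<in>space \<omega>. (\<Sum>j<length B. PB B j l) = 1)) \<and>
       (\<forall>A B. povm A \<longrightarrow> povm B \<longrightarrow>
          (\<forall>i < length A. \<forall>j < length B.
             trace (W ** tensor (A ! i) (B ! j)) =
             complex_of_real (\<integral>l. PA A i l * PB B j l \<partial>\<omega>))))"
proof -
  have meas: "f \<in> borel_measurable om" for f :: "hidden \<Rightarrow> real"
    by (simp add: om_def)
  have A: "(\<forall>i < length A. PAf A i \<in> borel_measurable om \<and>
             (\<forall>l\<in>space om. 0 \<le> PAf A i l \<and> PAf A i l \<le> 1)) \<and>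
          (\<forall>l\<in>space om. (\<Sum>i<length A. PAf A i l) = 1)" if pA: "povm A" for A
  proof (intro conjI allI impI ballI meas)
    fix i l assume i: "i < length A"
    show "0 \<le> PAf A i l" by (rule PA_nonneg[OF pA i])
    show "PAf A i l \<le> 1"
      by (rule le_of_sum1[of "{..<length A}" "\<lambda>i. PAf A i l"]) (use PA_nonneg[OF pA] PA_sum[OF pA] i in auto)
  next
    fix l show "(\<Sum>i<length A. PAf A i l) = 1" by (rule PA_sum[OF pA])
  qed
  have B: "(\<forall>j < length B. PBf B j \<in> borel_measurable om \<and>
             (\<forall>l\<in>space om. 0 \<le> PBf B j l \<and> PBf B j l \<le> 1)) \<and>
          (\<forall>l\<in>space om. (\<Sum>j<length B. PBf B j l) = 1)" if pB: "povm B" for B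
  proof (intro conjI allI impI ballI meas)
    fix j l assume j: "j < length B"
    show "0 \<le> PBf B j l" by (rule PB_props(1)[OF pB j])
    show "PBf B j l \<le> 1"
      by (rule le_of_sum1[of "{..<length B}" "\<lambda>j. PBf B j l"]) (use PB_props[OF pB] j in auto)
  next
    fix l show "(\<Sum>j<length B. PBf B j l) = 1" by (rule PB_props(2)[OF pB])
  qed
  have C: "trace (Wm ** tensor (A ! i) (B ! j)) = complex_of_real (\<integral>l. PAf A i l * PBf B j l \<partial>om)"
    if "povm A" "povm B" "i < length A" "j < length B" for A B i j
    unfolding corr[OF that] using that
    by (simp add: trace_Wm_tensor psd_herm povm_psd)
  show ?thesis
    apply (rule exI[of _ Wm])
    apply (rule conjI[OF bq_Wm])
    apply (rule exI[of _ om], rule exI[of _ PAf], rule exI[of _ PBf])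
    using prob_om A B C by blast
qed

end
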